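(* Let $p\in(1,\infty)$, let $X$ be a Banach space and $(Y,d_Y)$ a metric space, and suppose $X$ coarse Lipschitz embeds into $Y$. If $Y$ has property HFC$_{p,d}$ (resp. HIC$_{p,d}$, resp. HC$_{p,d}$), then $X$ has property HFC$_{p,d}$ (resp. HIC$_{p,d}$, resp. HC$_{p,d}$).
   Context: Notation: for infinite $\mathbb M\subseteq\mathbb N$ and $k\in\mathbb N$, $[\mathbb M]^k$ is the set of $\bar n=(n_1,\dots,n_k)\in\mathbb M^k$ with $n_1<\dots<n_k$, with Hamming distance $d_{\mathbb H}(\bar n,\bar m)=|\{j:n_j\ne m_j\}|$; $[\mathbb M]^\omega$ is the set of infinite subsets of $\mathbb M$; $I_k(\mathbb M)=\{(\bar n,\bar m): n_1<m_1<\dots<n_k<m_k\}$; $H_j(\mathbb M)=\{(\bar n,\bar m)\in([\mathbb M]^k)^2: n_i=m_i\ (i\ne j),\ n_j<m_j\}$. For a metric space $(M,d)$, $p\in(1,\infty)$, $\lambda>0$, and a Lipschitz $f:([\mathbb N]^k,d_{\mathbb H})\to M$, put $\alpha_j=\sup_{(\bar n,\bar m)\in H_j(\mathbb N)}d(f(\bar n),f(\bar m))$. $M$ has $\lambda$-HFC$_{p,d}$ (resp. $\lambda$-HIC$_{p,d}$) if for every $k$ and every such $f$ there is $\mathbb M\in[\mathbb N]^\omega$ with $d(f(\bar n),f(\bar m))\le\lambda(\sum_{j=1}^k\alpha_j^p)^{1/p}$ for all $\bar n,\bar m\in[\mathbb M]^k$ (resp. all $(\bar n,\bar m)\in I_k(\mathbb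 M)$). $M$ has $\lambda$-HC$_{p,d}$ if for every $k$ and every such $f$ there are $\bar n,\bar m\in[\mathbb N]^k$ with $\bar n\cap\bar m=\varnothing$ (as sets) and $d(f(\bar n),f(\bar m))\le\lambda(\sum_{j=1}^k\alpha_j^p)^{1/p}$. Property HFC$_{p,d}$ (etc.) means $\lambda$-HFC$_{p,d}$ (etc.) for some $\lambda>0$. A map $\varphi:X\to Y$ is a coarse Lipschitz embedding if there are $A,B,C,D\in(0,\infty)$ with $\rho_\varphi(t)\ge At-B$ and $\omega_\varphi(t)\le Ct+D$ for all $t\ge0$, where $\rho_\varphi(t)=\inf\{d_Y(\varphi(x),\varphi(y)):\|x-y\|\ge t\}$ and $\omega_\varphi(t)=\sup\{d_Y(\varphi(x),\varphi(y)):\|x-y\|\le t\}$. *)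

theory Defs
  imports "HOL-Analysis.Analysis"
begin

text \<open>k-tuples n_1 < ... < n_k from a set M, represented as strictly increasing lists
  (list index j corresponds to the paper's index j+1).\<close>
definition tuples :: "nat set \<Rightarrow> nat \<Rightarrow> nat list set" where
  "tuples M k = {ns. length ns = k \<and> sorted_wrt (<) ns \<and> set ns \<subseteq> M}"

definition hamming :: "nat list \<Rightarrow> nat list \<Rightarrow> nat" where
  "hamming ns ms = card {j. j < length ns \<and> ns ! j \<noteq> ms ! j}"

definition interlaced :: "nat set \<Rightarrow> nat \<Rightarrow> (nat list \<times> nat list) set" where
  "interlaced M k = {(ns, ms). ns \<in> tuples M k \<and> ms \<in> tuples M k \<and>
      (\<forall>i<k. ns ! i < ms ! i) \<and> (\<forall>i. i + 1 < k \<longrightarrow> ms ! i < ns ! (i + 1))}"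

text \<open>H_j(M) (0-based index j)\<close>
definition Hpairs :: "nat set \<Rightarrow> nat \<Rightarrow> nat \<Rightarrow> (nat list \<times> nat list) set" where
  "Hpairs M k j = {(ns, ms). ns \<in> tuples M k \<and> ms \<in> tuples M k \<and>
      (\<forall>i<k. i \<noteq> j \<longrightarrow> ns ! i = ms ! i) \<and> ns ! j < ms ! j}"

definition hlipschitz :: "nat \<Rightarrow> (nat list \<Rightarrow> 'b::metric_space) \<Rightarrow> bool" where
  "hlipschitz k f \<longleftrightarrow> (\<exists>L. \<forall>ns\<in>tuples UNIV k. \<forall>ms\<in>tuples UNIV k.
      dist (f ns) (f ms) \<le> L * real (hamming ns ms))"

definition alpha :: "nat \<Rightarrow> (nat list \<Rightarrow> 'b::metric_space) \<Rightarrow> nat \<Rightarrow> real" where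
  "alpha k f j = (SUP nm\<in>Hpairs UNIV k j. dist (f (fst nm)) (f (snd nm)))"

definition hbound :: "real \<Rightarrow> real \<Rightarrow> nat \<Rightarrow> (nat list \<Rightarrow> 'b::metric_space) \<Rightarrow> real" where
  "hbound p lam k f = lam * (\<Sum>j<k. alpha k f j powr p) powr (1 / p)"

definition lam_HFC :: "real \<Rightarrow> real \<Rightarrow> 'b::metric_space itself \<Rightarrow> bool" where
  "lam_HFC p lam _ \<longleftrightarrow> (\<forall>k (f :: nat list \<Rightarrow> 'b). hlipschitz k f \<longrightarrow>
     (\<exists>M. infinite M \<and> (\<forall>ns\<in>tuples M k. \<forall>ms\<in>tuples M k.
        dist (f ns) (f ms) \<le> hbound p lam k f)))"

definition lam_HIC :: "real \<Rightarrow> real \<Rightarrow> 'b::metric_space itself \<Rightarrow> bool" where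
  "lam_HIC p lam _ \<longleftrightarrow> (\<forall>k (f :: nat list \<Rightarrow> 'b). hlipschitz k f \<longrightarrow>
     (\<exists>M. infinite M \<and> (\<forall>(ns, ms)\<in>interlaced M k.
        dist (f ns) (f ms) \<le> hbound p lam k f)))"

definition lam_HC :: "real \<Rightarrow> real \<Rightarrow> 'b::metric_space itself \<Rightarrow> bool" where
  "lam_HC p lam _ \<longleftrightarrow> (\<forall>k (f :: nat list \<Rightarrow> 'b). hlipschitz k f \<longrightarrow>
     (\<exists>ns\<in>tuples UNIV k. \<exists>ms\<in>tuples UNIV k. set ns \<inter> set ms = {} \<and>
        dist (f ns) (f ms) \<le> hbound p lam k f))"

definition HFC :: "real \<Rightarrow> 'b::metric_space itself \<Rightarrow> bool" where
  "HFC p T \<longleftrightarrow> (\<exists>lam>0. lam_HFC p lam T)"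

definition HIC :: "real \<Rightarrow> 'b::metric_space itself \<Rightarrow> bool" where
  "HIC p T \<longleftrightarrow> (\<exists>lam>0. lam_HIC p lam T)"

definition HC :: "real \<Rightarrow> 'b::metric_space itself \<Rightarrow> bool" where
  "HC p T \<longleftrightarrow> (\<exists>lam>0. lam_HC p lam T)"

text \<open>Compression and expansion moduli, valued in the extended reals
  (inf of empty set = +\<infinity>).\<close>
definition rho_mod :: "('a::real_normed_vector \<Rightarrow> 'b::metric_space) \<Rightarrow> real \<Rightarrow> ereal" where
  "rho_mod \<phi> t = Inf {ereal (dist (\<phi> x) (\<phi> y)) | x y. norm (x - y) \<ge> t}"

definition omega_mod :: "('a::real_normed_vector \<Rightarrow> 'b::metric_space) \<Rightarrow> real \<Rightarrow> ereal" where
  "omega_mod \<phi> t = Sup {ereal (dist (\<phi> x) (\<phi> y)) | x y. norm (x - y) \<le> t}"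

definition coarse_lipschitz_embedding :: "('a::real_normed_vector \<Rightarrow> 'b::metric_space) \<Rightarrow> bool" where
  "coarse_lipschitz_embedding \<phi> \<longleftrightarrow> (\<exists>A B C D. A > 0 \<and> B > 0 \<and> C > 0 \<and> D > 0 \<and>
     (\<forall>t\<ge>0. rho_mod \<phi> t \<ge> ereal (A * t - B) \<and> omega_mod \<phi> t \<le> ereal (C * t + D)))"

end

theory Submission imports Defs begin

lemma cle_bounds:
  assumes "coarse_lipschitz_embedding \<phi>"
  shows "\<exists>A B C D. A > 0 \<and> B > 0 \<and> C > 0 \<and> D > 0 \<and>
     (\<forall>x y. dist (\<phi> x) (\<phi> y) \<le> C * norm (x - y) + D) \<and>
     (\<forall>x y. A * norm (x - y) - B \<le> dist (\<phi> x) (\<phi> y))"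
proof -
  obtain A B C D where pos: "A > 0" "B > 0" "C > 0" "D > 0" and
    h: "\<And>t. t \<ge> 0 \<Longrightarrow> rho_mod \<phi> t \<ge> ereal (A * t - B) \<and> omega_mod \<phi> t \<le> ereal (C * t + D)"
    using assms unfolding coarse_lipschitz_embedding_def by blast
  have 1: "dist (\<phi> x) (\<phi> y) \<le> C * norm (x - y) + D" for x y
  proof -
    have "ereal (dist (\<phi> x) (\<phi> y)) \<le> omega_mod \<phi> (norm (x - y))"
      unfolding omega_mod_def by (rule Sup_upper) auto
    also have "\<dots> \<le> ereal (C * norm (x - y) + D)" using h[of "norm (x - y)"] by simp
    finally show ?thesis by simp
  qed
  have 2: "A * norm (x - y) - B \<le> dist (\<phi> x) (\<phi> y)" for x y
  proof -
    have "ereal (A * norm (x - y) - B) \<le> rho_mod \<phi> (norm (x - y))" using h[of "norm (x - y)"] by simp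
    also have "\<dots> \<le> ereal (dist (\<phi> x) (\<phi> y))"
      unfolding rho_mod_def by (rule Inf_lower) auto
    finally show ?thesis by simp
  qed
  show ?thesis
    by (rule exI[of _ A], rule exI[of _ B], rule exI[of _ C], rule exI[of _ D])
       (intro conjI allI pos 1 2)
qed

lemma tuples_neq_ham:
  assumes "ns \<in> tuples UNIV k" "ms \<in> tuples UNIV k" "ns \<noteq> ms"
  shows "hamming ns ms \<ge> 1"
proof -
  have len: "length ns = k" "length ms = k" using assms(1,2) unfolding tuples_def by auto
  have ex: "\<exists>j<length ns. ns ! j \<noteq> ms ! j"
  proof (rule ccontr)
    assume "\<not> (\<exists>j<length ns. ns ! j \<noteq> ms ! j)"
    then have "ns = ms" using len by (intro nth_equalityI) auto
    then show False using assms(3) by simp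
  qed
  then obtain j where j: "j < length ns" "ns ! j \<noteq> ms ! j" by blast
  have fin: "finite {j. j < length ns \<and> ns ! j \<noteq> ms ! j}" by simp
  have "j \<in> {j. j < length ns \<and> ns ! j \<noteq> ms ! j}" using j by simp
  then have "card {j. j < length ns \<and> ns ! j \<noteq> ms ! j} > 0"
    using fin card_gt_0_iff by blast
  then show ?thesis unfolding hamming_def by simp
qed

lemma ham_le: "hamming ns ms \<le> length ns"
proof -
  have "{j. j < length ns \<and> ns ! j \<noteq> ms ! j} \<subseteq> {..<length ns}" by auto
  then show ?thesis unfolding hamming_def by (metis card_lessThan card_mono finite_lessThan)
qed

lemma Hpairs_ne:
  assumes "j < k" shows "Hpairs UNIV k j \<noteq> {}"
proof -
  define ns where "ns = map (\<lambda>i. 2*i) [0..<k]"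
  define ms where "ms = ns[j := 2*j+1]"
  have "ns \<in> tuples UNIV k" unfolding tuples_def ns_def
    by (auto simp: sorted_wrt_iff_nth_less)
  moreover have "ms \<in> tuples UNIV k" using assms unfolding tuples_def ms_def ns_def
    by (auto simp: sorted_wrt_iff_nth_less nth_list_update)
  moreover have "(\<forall>i<k. i \<noteq> j \<longrightarrow> ns ! i = ms ! i) \<and> ns ! j < ms ! j"
    using assms unfolding ms_def ns_def by auto
  ultimately have "(ns, ms) \<in> Hpairs UNIV k j" unfolding Hpairs_def by auto
  then show ?thesis by blast
qed

lemma alpha_facts:
  assumes "hlipschitz k f" "j < k"
  shows "\<And>ns ms. (ns, ms) \<in> Hpairs UNIV k j \<Longrightarrow> dist (f ns) (f ms) \<le> alpha k f j"
    and "alpha k f j \<ge> 0"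
proof -
  obtain L where L: "\<And>ns ms. ns\<in>tuples UNIV k \<Longrightarrow> ms\<in>tuples UNIV k \<Longrightarrow>
      dist (f ns) (f ms) \<le> L * real (hamming ns ms)"
    using assms(1) unfolding hlipschitz_def by blast
  have bdd: "bdd_above ((\<lambda>nm. dist (f (fst nm)) (f (snd nm))) ` Hpairs UNIV k j)"
  proof (rule bdd_aboveI2)
    fix nm assume "nm \<in> Hpairs UNIV k j"
    then have t: "fst nm \<in> tuples UNIV k" "snd nm \<in> tuples UNIV k" "length (fst nm) = k"
      unfolding Hpairs_def tuples_def by auto
    have h1: "L * real (hamming (fst nm) (snd nm)) \<le> \<bar>L\<bar> * real (hamming (fst nm) (snd nm))"
      by (rule mult_right_mono) auto
    have "real (hamming (fst nm) (snd nm)) \<le> real k"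
      using ham_le[of "fst nm" "snd nm"] t(3) by simp
    then have h2: "\<bar>L\<bar> * real (hamming (fst nm) (snd nm)) \<le> \<bar>L\<bar> * real k"
      by (rule mult_left_mono) simp
    have "L * real (hamming (fst nm) (snd nm)) \<le> \<bar>L\<bar> * real k" using h1 h2 by linarith
    then show "dist (f (fst nm)) (f (snd nm)) \<le> \<bar>L\<bar> * real k" using L[OF t(1,2)] by linarith
  qed
  show 1: "dist (f ns) (f ms) \<le> alpha k f j" if "(ns, ms) \<in> Hpairs UNIV k j" for ns ms
    unfolding alpha_def using cSUP_upper[OF that bdd] by simp
  obtain nm where nm: "nm \<in> Hpairs UNIV k j" using Hpairs_ne[OF assms(2)] by blast
  obtain ns ms where e: "nm = (ns, ms)" by (metis surj_pair)
  have "dist (f ns) (f ms) \<le> alpha k f j" by (rule 1) (use nm e in simp)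
  then show "alpha k f j \<ge> 0" using zero_le_dist[of "f ns" "f ms"] by linarith
qed

lemma const_aux:
  assumes hl: "hlipschitz k f" and z: "\<forall>j<k. alpha k f j = 0"
  shows "ns \<in> tuples UNIV k \<Longrightarrow> ms \<in> tuples UNIV k \<Longrightarrow> (\<forall>i<k. ns!i \<le> ms!i)
     \<Longrightarrow> (\<forall>j. i \<le> j \<and> j < k \<longrightarrow> ns!j = ms!j) \<Longrightarrow> f ns = f ms"
proof (induction i arbitrary: ns)
  case 0
  then have "ns = ms" by (intro nth_equalityI) (auto simp: tuples_def)
  then show ?case by simp
next
  case (Suc i)
  show ?case
  proof (cases "k \<le> i")
    case True
    then have "\<forall>j. i \<le> j \<and> j < k \<longrightarrow> ns!j = ms!j" by auto
    then show ?thesis using Suc.IH[OF Suc.prems(1,2,3)] by simp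
  next
    case False
    then have ik: "i < k" by simp
    have lens: "length ns = k" "length ms = k" using Suc.prems by (auto simp: tuples_def)
    have sn: "\<And>a b. a < b \<Longrightarrow> b < k \<Longrightarrow> ns!a < ns!b" and sm: "\<And>a b. a < b \<Longrightarrow> b < k \<Longrightarrow> ms!a < ms!b"
      using Suc.prems(1,2) lens by (simp_all add: tuples_def sorted_wrt_nth_less)
    define ns' where "ns' = ns[i := ms!i]"
    have nth': "ns'!a = (if a = i then ms!i else ns!a)" if "a < k" for a
      using that lens ik unfolding ns'_def by (auto simp: nth_list_update)
    have "ns' \<in> tuples UNIV k"
      unfolding tuples_def
    proof (intro CollectI conjI)
      show "length ns' = k" using lens unfolding ns'_def by simp
      show "sorted_wrt (<) ns'"
        unfolding sorted_wrt_iff_nth_less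
      proof (intro allI impI)
        fix a b assume ab: "a < b" "b < length ns'"
        then have bk: "b < k" "a < k" using lens unfolding ns'_def by auto
        show "ns'!a < ns'!b"
        proof (cases "a = i")
          case True
          then have "ns!b = ms!b" using Suc.prems(4) ab bk by auto
          moreover have "ms!i < ms!b" using sm[of i b] True ab bk by simp
          ultimately show ?thesis using True ab bk nth'[of a] nth'[of b] by simp
        next
          case False
          show ?thesis
          proof (cases "b = i")
            case True
            have "ns!a < ns!i" using sn[of a i] ab bk True by simp
            moreover have "ns!i \<le> ms!i" using Suc.prems(3) ik by simp
            ultimately show ?thesis using False True ab bk nth'[of a] nth'[of b] by simp
          next
            case False2: False
            then show ?thesis using False ab bk nth'[of a] nth'[of b] sn[of a b] by simp
          qed
        qed
      qed
    qed simp
    have q1: "\<forall>a<k. ns'!a \<le> ms!a"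
    proof (intro allI impI)
      fix a assume "a < k" then show "ns'!a \<le> ms!a" using nth'[of a] Suc.prems(3) by simp
    qed
    have q2: "\<forall>j. i \<le> j \<and> j < k \<longrightarrow> ns'!j = ms!j"
    proof (intro allI impI)
      fix j assume "i \<le> j \<and> j < k" then show "ns'!j = ms!j" using nth'[of j] Suc.prems(4)
        by (cases "j = i") auto
    qed
    have e1: "f ns' = f ms"
      by (rule Suc.IH[OF \<open>ns' \<in> tuples UNIV k\<close> Suc.prems(2) q1 q2])
    have "f ns = f ns'"
    proof (cases "ns!i = ms!i")
      case True
      then have "ns' = ns" unfolding ns'_def by (metis list_update_id)
      then show ?thesis by simp
    next
      case False
      then have "ns!i < ms!i" using Suc.prems(3) ik by (simp add: order_less_le)
      then have "(ns, ns') \<in> Hpairs UNIV k i"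
        unfolding Hpairs_def using Suc.prems(1) \<open>ns' \<in> tuples UNIV k\<close> nth' ik by auto
      then have "dist (f ns) (f ns') \<le> alpha k f i" by (rule alpha_facts(1)[OF hl ik])
      then have "dist (f ns) (f ns') \<le> 0" using z ik by simp
      then show ?thesis by simp
    qed
    then show ?thesis using e1 by simp
  qed
qed

lemma const_f:
  assumes hl: "hlipschitz k f" and z: "\<forall>j<k. alpha k f j = 0"
    and "ns \<in> tuples UNIV k" "ms \<in> tuples UNIV k"
  shows "f ns = f ms"
proof -
  define N where "N = Max (set ns \<union> set ms)"
  define T where "T = map (\<lambda>i. N + i) [0..<k]"
  have T: "T \<in> tuples UNIV k" unfolding T_def tuples_def by (simp add: sorted_wrt_map)
  have len: "length ns = k" "length ms = k" using assms by (auto simp: tuples_def)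
  have p1: "\<forall>i<k. ns!i \<le> T!i"
  proof (intro allI impI)
    fix i assume "i < k"
    then have "ns!i \<in> set ns \<union> set ms" using len by simp
    then have "ns!i \<le> N" unfolding N_def by (simp add: Max_ge)
    then show "ns!i \<le> T!i" using \<open>i < k\<close> unfolding T_def by simp
  qed
  have p2: "\<forall>i<k. ms!i \<le> T!i"
  proof (intro allI impI)
    fix i assume "i < k"
    then have "ms!i \<in> set ns \<union> set ms" using len by simp
    then have "ms!i \<le> N" unfolding N_def by (simp add: Max_ge)
    then show "ms!i \<le> T!i" using \<open>i < k\<close> unfolding T_def by simp
  qed
  have v1: "\<forall>j. k \<le> j \<and> j < k \<longrightarrow> ns!j = T!j" and v2: "\<forall>j. k \<le> j \<and> j < k \<longrightarrow> ms!j = T!j" by auto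
  have "f ns = f T" "f ms = f T"
    using const_aux[OF hl z assms(3) T p1 v1] const_aux[OF hl z assms(4) T p2 v2] by simp_all
  then show ?thesis by simp
qed


lemma powr_add_le:
  fixes x y p :: real assumes "0 \<le> x" "0 \<le> y" "0 < p"
  shows "(x + y) powr p \<le> 2 powr p * (x powr p + y powr p)"
proof -
  have "(x + y) powr p \<le> (2 * max x y) powr p"
    using assms by (intro powr_mono2) auto
  also have "\<dots> = 2 powr p * max x y powr p"
    using assms by (simp add: powr_mult)
  also have "max x y powr p \<le> x powr p + y powr p"
    by (cases "x \<le> y") (auto simp: max_def)
  then have "2 powr p * max x y powr p \<le> 2 powr p * (x powr p + y powr p)"
    by (intro mult_left_mono) auto
  finally show ?thesis .
qed

lemma powr_root_add_le:
  fixes U V p :: real assumes "0 \<le> U" "0 \<le> V" "1 < p"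
  shows "(U + V) powr (1/p) \<le> 2 * (U powr (1/p) + V powr (1/p))"
proof -
  have "(U + V) powr (1/p) \<le> (2 * max U V) powr (1/p)"
    using assms by (intro powr_mono2) auto
  also have "\<dots> = 2 powr (1/p) * max U V powr (1/p)"
    using assms by (simp add: powr_mult)
  also have "\<dots> \<le> 2 * (U powr (1/p) + V powr (1/p))"
  proof (rule mult_mono)
    have "2 powr (1/p) \<le> 2 powr 1" using assms by (intro powr_mono) auto
    then show "2 powr (1/p) \<le> 2" by simp
    show "max U V powr (1/p) \<le> U powr (1/p) + V powr (1/p)"
      by (cases "U \<le> V") (auto simp: max_def)
  qed auto
  finally show ?thesis .
qed

lemma pow_est:
  fixes p c D :: real and a b :: "nat \<Rightarrow> real"
  assumes p: "1 < p" and c: "c \<ge> 0" and D: "D \<ge> 0"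
    and ab: "\<forall>j<k. 0 \<le> a j \<and> 0 \<le> b j \<and> b j \<le> c * a j + D"
  shows "(\<Sum>j<k. b j powr p) powr (1/p)
     \<le> 4 * (c * (\<Sum>j<k. a j powr p) powr (1/p) + (real k * D powr p) powr (1/p))"
proof -
  define S0 where "S0 = (\<Sum>j<k. a j powr p)"
  define U where "U = c powr p * S0"
  define V where "V = real k * D powr p"
  have S0: "S0 \<ge> 0" unfolding S0_def by (intro sum_nonneg) auto
  have U: "U \<ge> 0" "V \<ge> 0" unfolding U_def V_def using S0 by auto
  have "b j powr p \<le> 2 powr p * (c powr p * a j powr p + D powr p)" if "j < k" for j
  proof -
    have "b j powr p \<le> (c * a j + D) powr p"
      using ab that p by (intro powr_mono2) auto
    also have "\<dots> \<le> 2 powr p * ((c * a j) powr p + D powr p)"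
      using ab that p c D by (intro powr_add_le) auto
    finally show ?thesis using c ab that by (simp add: powr_mult)
  qed
  then have "(\<Sum>j<k. b j powr p) \<le> (\<Sum>j<k. 2 powr p * (c powr p * a j powr p + D powr p))"
    by (intro sum_mono) auto
  also have "\<dots> = 2 powr p * (U + V)"
    unfolding U_def V_def S0_def
    by (simp add: sum.distrib sum_distrib_left algebra_simps)
  finally have 1: "(\<Sum>j<k. b j powr p) \<le> 2 powr p * (U + V)" .
  have "(\<Sum>j<k. b j powr p) powr (1/p) \<le> (2 powr p * (U + V)) powr (1/p)"
    using 1 p by (intro powr_mono2) (auto intro: sum_nonneg)
  also have "\<dots> = 2 * (U + V) powr (1/p)"
    using U p by (simp add: powr_mult powr_powr)
  also have "\<dots> \<le> 2 * (2 * (U powr (1/p) + V powr (1/p)))"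
    using powr_root_add_le[OF U p] by simp
  also have "U powr (1/p) = c * S0 powr (1/p)"
    unfolding U_def using c S0 p by (simp add: powr_mult powr_powr)
  finally show ?thesis unfolding S0_def V_def by simp
qed


lemma zero_case:
  assumes hl: "hlipschitz k f" and p: "1 < p"
    and S: "\<not> (\<Sum>j<k. alpha k f j powr p) powr (1/p) > 0"
    and "ns \<in> tuples UNIV k" "ms \<in> tuples UNIV k"
  shows "f ns = f ms"
proof -
  have nn: "\<forall>j\<in>{..<k}. 0 \<le> alpha k f j powr p" by simp
  have "(\<Sum>j<k. alpha k f j powr p) powr (1/p) = 0"
    using S by (metis powr_ge_zero order_le_less)
  then have "(\<Sum>j<k. alpha k f j powr p) = 0" by simp
  then have "\<forall>j<k. alpha k f j powr p = 0"
    using sum_nonneg_eq_0_iff[of "{..<k}" "\<lambda>j. alpha k f j powr p"] by simp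
  then have "\<forall>j<k. alpha k f j = 0" by simp
  then show ?thesis using const_f[OF hl] assms(4,5) by blast
qed

lemma transfer:
  fixes \<phi> :: "'a::real_normed_vector \<Rightarrow> 'b::metric_space" and f :: "nat list \<Rightarrow> 'a"
  assumes pos: "A > 0" "B > 0" "C > 0" "D > 0"
    and up: "\<forall>x y. dist (\<phi> x) (\<phi> y) \<le> C * norm (x - y) + D"
    and lo: "\<forall>x y. A * norm (x - y) - B \<le> dist (\<phi> x) (\<phi> y)"
    and p: "1 < p" and lam: "lam > 0" and hl: "hlipschitz k f"
    and Spos: "(\<Sum>j<k. alpha k f j powr p) powr (1/p) > 0"
  shows "\<exists>g :: nat list \<Rightarrow> 'b. hlipschitz k g \<and> (\<forall>ns\<in>tuples UNIV k. \<forall>ms\<in>tuples UNIV k.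
     dist (g ns) (g ms) \<le> hbound p lam k g \<longrightarrow> dist (f ns) (f ms) \<le> hbound p (4*lam*C/A + 1) k f)"
proof -
  define S where "S = (\<Sum>j<k. alpha k f j powr p) powr (1/p)"
  define E where "E = (real k * D powr p) powr (1/p)"
  define t where "t = (4*lam*E + B) / (A*S)"
  have S: "S > 0" using Spos unfolding S_def .
  have E: "E \<ge> 0" unfolding E_def by simp
  have "4*lam*E \<ge> 0" using lam E by simp
  then have "4*lam*E + B > 0" using pos by linarith
  then have t: "t > 0" unfolding t_def using S pos by (intro divide_pos_pos) auto
  have tAS: "t * A * S = 4*lam*E + B" unfolding t_def using S pos by (simp add: field_simps)
  define g where "g = (\<lambda>ns. \<phi> (t *\<^sub>R f ns))"
  have nrm: "norm (t *\<^sub>R f ns - t *\<^sub>R f ms) = t * dist (f ns) (f ms)" for ns ms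
    using t by (simp add: dist_norm scaleR_diff_right[symmetric])
  have gup: "dist (g ns) (g ms) \<le> C * t * dist (f ns) (f ms) + D" for ns ms
  proof -
    have "dist (g ns) (g ms) \<le> C * norm (t *\<^sub>R f ns - t *\<^sub>R f ms) + D"
      unfolding g_def using up by blast
    then show ?thesis unfolding nrm by (simp add: mult.assoc)
  qed
  have glo: "A * t * dist (f ns) (f ms) - B \<le> dist (g ns) (g ms)" for ns ms
  proof -
    have "A * norm (t *\<^sub>R f ns - t *\<^sub>R f ms) - B \<le> dist (g ns) (g ms)"
      unfolding g_def using lo by blast
    then show ?thesis unfolding nrm by (simp add: mult.assoc)
  qed
  obtain L where L: "\<And>ns ms. ns\<in>tuples UNIV k \<Longrightarrow> ms\<in>tuples UNIV k \<Longrightarrow>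
      dist (f ns) (f ms) \<le> L * real (hamming ns ms)"
    using hl unfolding hlipschitz_def by blast
  have hg: "hlipschitz k g"
    unfolding hlipschitz_def
  proof (intro exI ballI)
    fix ns ms assume ns: "ns \<in> tuples UNIV k" and ms: "ms \<in> tuples UNIV k"
    show "dist (g ns) (g ms) \<le> (C * t * L + D) * real (hamming ns ms)"
    proof (cases "ns = ms")
      case True then show ?thesis by (simp add: hamming_def)
    next
      case False
      then have h: "real (hamming ns ms) \<ge> 1" using tuples_neq_ham[OF ns ms] by simp
      have "C * t * dist (f ns) (f ms) \<le> C * t * (L * real (hamming ns ms))"
        using L[OF ns ms] pos t by (intro mult_left_mono) auto
      moreover have "D \<le> D * real (hamming ns ms)" using h pos by simp
      ultimately show ?thesis using gup[of ns ms] by (simp add: algebra_simps)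
    qed
  qed
  have ag: "alpha k g j \<le> C * t * alpha k f j + D" if j: "j < k" for j
    unfolding alpha_def[of k g]
  proof (rule cSUP_least)
    show "Hpairs UNIV k j \<noteq> {}" using Hpairs_ne[OF j] .
    fix nm assume nm: "nm \<in> Hpairs UNIV k j"
    have "dist (f (fst nm)) (f (snd nm)) \<le> alpha k f j"
      using alpha_facts(1)[OF hl j, of "fst nm" "snd nm"] nm by simp
    then have "C * t * dist (f (fst nm)) (f (snd nm)) \<le> C * t * alpha k f j"
      using pos t by (intro mult_left_mono) auto
    then show "dist (g (fst nm)) (g (snd nm)) \<le> C * t * alpha k f j + D"
      using gup[of "fst nm" "snd nm"] by linarith
  qed
  have est: "(\<Sum>j<k. alpha k g j powr p) powr (1/p) \<le> 4 * (C * t * S + E)"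
    unfolding S_def E_def
  proof (rule pow_est[OF p])
    show "C * t \<ge> 0" using pos t by simp
    show "D \<ge> 0" using pos by simp
    show "\<forall>j<k. 0 \<le> alpha k f j \<and> 0 \<le> alpha k g j \<and> alpha k g j \<le> C * t * alpha k f j + D"
      using alpha_facts(2)[OF hl] alpha_facts(2)[OF hg] ag by blast
  qed
  have hbg: "hbound p lam k g \<le> lam * (4 * (C * t * S + E))"
    unfolding hbound_def using est lam by (intro mult_left_mono) auto
  have key: "dist (f ns) (f ms) \<le> hbound p (4*lam*C/A + 1) k f"
    if "dist (g ns) (g ms) \<le> hbound p lam k g" for ns ms
  proof -
    define d where "d = dist (f ns) (f ms)"
    have "A * t * d - B \<le> lam * (4 * (C * t * S + E))"
      using glo[of ns ms] that hbg unfolding d_def by linarith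
    then have "A * t * d \<le> 4*lam*C * t * S + t * A * S"
      using tAS by (simp add: algebra_simps)
    moreover have "(A*t)*((4*lam*C/A + 1)*S) = 4*lam*C * t * S + t * A * S"
      using pos by (simp add: field_simps)
    ultimately have "(A * t) * d \<le> (A * t) * ((4*lam*C/A + 1) * S)"
      by (simp add: mult.assoc)
    then have "d \<le> (4*lam*C/A + 1) * S"
      using pos t by (simp add: mult_le_cancel_left_pos)
    then show ?thesis unfolding d_def hbound_def S_def .
  qed
  show ?thesis using hg key by blast
qed

lemma zero_bound:
  assumes hl: "hlipschitz k f" and p: "1 < p"
    and S: "\<not> (\<Sum>j<k. alpha k f j powr p) powr (1/p) > 0"
    and l: "lam' \<ge> 0" and ns: "ns \<in> tuples UNIV k" and ms: "ms \<in> tuples UNIV k"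
  shows "dist (f ns) (f ms) \<le> hbound p lam' k f"
proof -
  have e: "f ns = f ms" using zero_case[OF hl p S ns ms] .
  have "0 \<le> hbound p lam' k f" unfolding hbound_def using l by simp
  then show ?thesis unfolding e by simp
qed

lemma interlaced_tuples:
  "(ns, ms) \<in> interlaced M k \<Longrightarrow> ns \<in> tuples UNIV k \<and> ms \<in> tuples UNIV k"
  unfolding interlaced_def tuples_def by auto

lemma ball_interlaced:
  "(\<And>ns ms. ns \<in> tuples UNIV k \<Longrightarrow> ms \<in> tuples UNIV k \<Longrightarrow> P ns ms) \<Longrightarrow> \<forall>(ns, ms)\<in>interlaced M k. P ns ms"
  using interlaced_tuples by fastforce

lemma ball_interlaced2:
  "(\<And>ns ms. (ns, ms) \<in> interlaced M k \<Longrightarrow> P ns ms) \<Longrightarrow> \<forall>(ns, ms)\<in>interlaced M k. P ns ms"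
  by auto

theorem mainTheorem2:
  fixes p :: real and \<phi> :: "'a::banach \<Rightarrow> 'b::metric_space"
  assumes "1 < p"
    and "coarse_lipschitz_embedding \<phi>"
  shows "(HFC p TYPE('b) \<longrightarrow> HFC p TYPE('a))
       \<and> (HIC p TYPE('b) \<longrightarrow> HIC p TYPE('a))
       \<and> (HC p TYPE('b) \<longrightarrow> HC p TYPE('a))"
proof -
  obtain A B C D where pos: "A > 0" "B > 0" "C > 0" "D > 0"
    and up: "\<forall>x y. dist (\<phi> x) (\<phi> y) \<le> C * norm (x - y) + D"
    and lo: "\<forall>x y. A * norm (x - y) - B \<le> dist (\<phi> x) (\<phi> y)"
    using cle_bounds[OF assms(2)] by blast
  note tr = transfer[OF pos up lo assms(1)]
  have hb0: "hbound p lam' k f \<ge> 0" if "lam' \<ge> 0" for lam' k and f :: "nat list \<Rightarrow> 'a"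
    unfolding hbound_def using that by simp
  have lpos: "4*lam*C/A + 1 > 0" if "lam > 0" for lam
  proof -
    have "0 \<le> 4*lam*C/A" using that pos by (intro divide_nonneg_pos) auto
    then show ?thesis by linarith
  qed
  have 1: "HFC p TYPE('a)" if hY: "HFC p TYPE('b)"
  proof -
    obtain lam where lam: "lam > 0" "lam_HFC p lam TYPE('b)" using hY unfolding HFC_def by blast
    have "lam_HFC p (4*lam*C/A + 1) TYPE('a)"
      unfolding lam_HFC_def
    proof (intro allI impI)
      fix k and f :: "nat list \<Rightarrow> 'a" assume hl: "hlipschitz k f"
      show "\<exists>M. infinite M \<and> (\<forall>ns\<in>tuples M k. \<forall>ms\<in>tuples M k. dist (f ns) (f ms) \<le> hbound p (4*lam*C/A + 1) k f)"
      proof (cases "(\<Sum>j<k. alpha k f j powr p) powr (1/p) > 0")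
        case True
        obtain g :: "nat list \<Rightarrow> 'b" where g: "hlipschitz k g" and gk: "\<forall>ns\<in>tuples UNIV k. \<forall>ms\<in>tuples UNIV k.
           dist (g ns) (g ms) \<le> hbound p lam k g \<longrightarrow> dist (f ns) (f ms) \<le> hbound p (4*lam*C/A + 1) k f"
          using tr[OF lam(1) hl True] by blast
        obtain M where M: "infinite M" "\<forall>ns\<in>tuples M k. \<forall>ms\<in>tuples M k. dist (g ns) (g ms) \<le> hbound p lam k g"
          using lam(2) g unfolding lam_HFC_def by blast
        have sub: "tuples M k \<subseteq> tuples UNIV k" unfolding tuples_def by auto
        have "\<forall>ns\<in>tuples M k. \<forall>ms\<in>tuples M k. dist (f ns) (f ms) \<le> hbound p (4*lam*C/A + 1) k f"
        proof (intro ballI)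
          fix ns ms assume a: "ns \<in> tuples M k" "ms \<in> tuples M k"
          then have "dist (g ns) (g ms) \<le> hbound p lam k g" using M(2) by blast
          moreover have "ns \<in> tuples UNIV k" "ms \<in> tuples UNIV k" using a sub by auto
          ultimately show "dist (f ns) (f ms) \<le> hbound p (4*lam*C/A + 1) k f" using gk by blast
        qed
        then show ?thesis using M(1) by blast
      next
        case False
        have all: "\<forall>ns\<in>tuples UNIV k. \<forall>ms\<in>tuples UNIV k. dist (f ns) (f ms) \<le> hbound p (4*lam*C/A + 1) k f"
        proof (intro ballI)
          fix ns ms assume "ns \<in> tuples UNIV k" "ms \<in> tuples UNIV k"
          then have "f ns = f ms" by (rule zero_case[OF hl assms(1) False])
          then show "dist (f ns) (f ms) \<le> hbound p (4*lam*C/A + 1) k f"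
            using hb0 lpos[OF lam(1)] by simp
        qed
        show ?thesis by (rule exI[of _ "UNIV::nat set"], rule conjI[OF infinite_UNIV_nat], rule all)
      qed
    qed
    then show ?thesis unfolding HFC_def using lpos[OF lam(1)] by blast
  qed
  have 2: "HIC p TYPE('a)" if hY: "HIC p TYPE('b)"
  proof -
    obtain lam where lam: "lam > 0" "lam_HIC p lam TYPE('b)" using hY unfolding HIC_def by blast
    have "lam_HIC p (4*lam*C/A + 1) TYPE('a)"
      unfolding lam_HIC_def
    proof (intro allI impI)
      fix k and f :: "nat list \<Rightarrow> 'a" assume hl: "hlipschitz k f"
      show "\<exists>M. infinite M \<and> (\<forall>(ns, ms)\<in>interlaced M k. dist (f ns) (f ms) \<le> hbound p (4*lam*C/A + 1) k f)"
      proof (cases "(\<Sum>j<k. alpha k f j powr p) powr (1/p) > 0")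
        case True
        obtain g :: "nat list \<Rightarrow> 'b" where g: "hlipschitz k g" and gk: "\<forall>ns\<in>tuples UNIV k. \<forall>ms\<in>tuples UNIV k.
           dist (g ns) (g ms) \<le> hbound p lam k g \<longrightarrow> dist (f ns) (f ms) \<le> hbound p (4*lam*C/A + 1) k f"
          using tr[OF lam(1) hl True] by blast
        obtain M where M: "infinite M" "\<forall>(ns, ms)\<in>interlaced M k. dist (g ns) (g ms) \<le> hbound p lam k g"
          using lam(2)[unfolded lam_HIC_def, rule_format, OF g] by blast
        have "\<forall>(ns, ms)\<in>interlaced M k. dist (f ns) (f ms) \<le> hbound p (4*lam*C/A + 1) k f"
        proof (rule ball_interlaced2)
          fix ns ms assume nm: "(ns, ms) \<in> interlaced M k"
          have "dist (g ns) (g ms) \<le> hbound p lam k g" using bspec[OF M(2) nm] by simp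
          moreover have "ns \<in> tuples UNIV k" "ms \<in> tuples UNIV k" using interlaced_tuples[OF nm] by auto
          ultimately show "dist (f ns) (f ms) \<le> hbound p (4*lam*C/A + 1) k f"
            using gk by blast
        qed
        then show ?thesis using M(1) by blast
      next
        case False
        have all: "\<forall>(ns, ms)\<in>interlaced UNIV k. dist (f ns) (f ms) \<le> hbound p (4*lam*C/A + 1) k f"
          using zero_bound[OF hl assms(1) False less_imp_le[OF lpos[OF lam(1)]]]
          by (rule ball_interlaced)
        show ?thesis by (rule exI[of _ "UNIV::nat set"], rule conjI[OF infinite_UNIV_nat], rule all)
      qed
    qed
    then show ?thesis unfolding HIC_def using lpos[OF lam(1)] by blast
  qed
  have 3: "HC p TYPE('a)" if hY: "HC p TYPE('b)"
  proof -
    obtain lam where lam: "lam > 0" "lam_HC p lam TYPE('b)" using hY unfolding HC_def by blast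
    have "lam_HC p (4*lam*C/A + 1) TYPE('a)"
      unfolding lam_HC_def
    proof (intro allI impI)
      fix k and f :: "nat list \<Rightarrow> 'a" assume hl: "hlipschitz k f"
      show "\<exists>ns\<in>tuples UNIV k. \<exists>ms\<in>tuples UNIV k. set ns \<inter> set ms = {} \<and>
          dist (f ns) (f ms) \<le> hbound p (4*lam*C/A + 1) k f"
      proof (cases "(\<Sum>j<k. alpha k f j powr p) powr (1/p) > 0")
        case True
        obtain g :: "nat list \<Rightarrow> 'b" where g: "hlipschitz k g" and gk: "\<forall>ns\<in>tuples UNIV k. \<forall>ms\<in>tuples UNIV k.
           dist (g ns) (g ms) \<le> hbound p lam k g \<longrightarrow> dist (f ns) (f ms) \<le> hbound p (4*lam*C/A + 1) k f"
          using tr[OF lam(1) hl True] by blast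
        obtain ns ms where nm: "ns \<in> tuples UNIV k" "ms \<in> tuples UNIV k" "set ns \<inter> set ms = {}"
          "dist (g ns) (g ms) \<le> hbound p lam k g"
          using lam(2)[unfolded lam_HC_def, rule_format, OF g] by blast
        have "dist (f ns) (f ms) \<le> hbound p (4*lam*C/A + 1) k f" using nm(1,2,4) gk by blast
        then show ?thesis using nm(1,2,3) by blast
      next
        case False
        have t1: "[0..<k] \<in> tuples UNIV k" and t2: "[k..<k+k] \<in> tuples UNIV k"
          unfolding tuples_def by simp_all
        have dj: "set [0..<k] \<inter> set [k..<k+k] = {}" by (simp add: set_eq_iff)
        have "f [0..<k] = f [k..<k+k]" using zero_case[OF hl assms(1) False t1 t2] .
        then have "dist (f [0..<k]) (f [k..<k+k]) \<le> hbound p (4*lam*C/A + 1) k f"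
          using hb0 lpos[OF lam(1)] by simp
        then show ?thesis using t1 t2 dj by (intro bexI[of _ "[0..<k]"] bexI[of _ "[k..<k+k]"]) simp_all
      qed
    qed
    then show ?thesis unfolding HC_def using lpos[OF lam(1)] by blast
  qed
  show ?thesis using 1 2 3 by blast
qed

end
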